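(* Let $K,L\ (\le K),F,Z,S,u$ be positive integers and let $\hat{\mathbf{A}}$ be a $(K,L,F,Z,S)$ EPDA. Then the $F\times uK$ array $\mathbf{A}=[\hat{\mathbf{A}}\,|\,\hat{\mathbf{A}}\,|\,\cdots\,|\,\hat{\mathbf{A}}]$ obtained by placing $u$ copies of $\hat{\mathbf{A}}$ side by side is a $(uK,uL,F,Z,S)$ EPDA.
   Context: Notation: $[n]=\{1,\dots,n\}$. An $F\times K$ array $\mathbf{A}=[a_{j,k}]$ with entries either a symbol $\star$ or integers in $[S]$ is a $(K,L,F,Z,S)$ EPDA (where $L\le K$) if: (C1) $\star$ appears exactly $Z$ times in each column; (C2) every integer in $[S]$ occurs at least once; (C3) no integer appears more than once in any column; (C4) for each $s\in[S]$, letting $\mathbf{A}^{(s)}$ be the subarray obtained by deleting all rows and columns of $\mathbf{A}$ not containing $s$, no row of $\mathbf{A}^{(s)}$ contains more than $L$ integer entries. *)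

theory Defs
  imports Main
begin

text \<open>An F x K array with entries star or an integer in [S] is modelled as a function
  A :: nat => nat => nat option, where A j k is the entry in row j (0 <= j < F) and
  column k (0 <= k < K); None represents the star symbol, Some s the integer s.
  Values outside the index ranges are irrelevant.\<close>

definition row_has :: "(nat \<Rightarrow> nat \<Rightarrow> nat option) \<Rightarrow> nat \<Rightarrow> nat \<Rightarrow> nat \<Rightarrow> bool" where
  "row_has A K j s \<longleftrightarrow> (\<exists>k<K. A j k = Some s)"

definition col_has :: "(nat \<Rightarrow> nat \<Rightarrow> nat option) \<Rightarrow> nat \<Rightarrow> nat \<Rightarrow> nat \<Rightarrow> bool" where
  "col_has A F k s \<longleftrightarrow> (\<exists>j<F. A j k = Some s)"

definition is_EPDA ::
  "nat \<Rightarrow> nat \<Rightarrow> nat \<Rightarrow> nat \<Rightarrow> nat \<Rightarrow> (nat \<Rightarrow> nat \<Rightarrow> nat option) \<Rightarrow> bool" where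
  "is_EPDA K L F Z S A \<longleftrightarrow>
     L \<le> K \<and>
     \<comment> \<open>entries are star or integers in [S]\<close>
     (\<forall>j<F. \<forall>k<K. \<forall>s. A j k = Some s \<longrightarrow> s \<in> {1..S}) \<and>
     \<comment> \<open>(C1) star appears exactly Z times in each column\<close>
     (\<forall>k<K. card {j. j < F \<and> A j k = None} = Z) \<and>
     \<comment> \<open>(C2) every integer in [S] occurs at least once\<close>
     (\<forall>s\<in>{1..S}. \<exists>j<F. \<exists>k<K. A j k = Some s) \<and>
     \<comment> \<open>(C3) no integer appears more than once in any column\<close>
     (\<forall>k<K. \<forall>j1<F. \<forall>j2<F. A j1 k \<noteq> None \<longrightarrow> A j1 k = A j2 k \<longrightarrow> j1 = j2) \<and>
     \<comment> \<open>(C4) in the subarray A^(s) (rows and columns containing s), no row has more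
         than L integer entries\<close>
     (\<forall>s\<in>{1..S}. \<forall>j<F. row_has A K j s \<longrightarrow>
        card {k. k < K \<and> col_has A F k s \<and> A j k \<noteq> None} \<le> L)"

text \<open>Horizontal concatenation of u copies of an F x K array: column k of the result
  (0 <= k < u*K) is column (k mod K) of the original.\<close>

definition rep_cols :: "nat \<Rightarrow> (nat \<Rightarrow> nat \<Rightarrow> nat option) \<Rightarrow> nat \<Rightarrow> nat \<Rightarrow> nat option" where
  "rep_cols K A = (\<lambda>j k. A j (k mod K))"

end

theory Submission
  imports Defs
begin

lemma card_rep_le:
  assumes "0 < K" "finite B" "B \<subseteq> {..<K}"
  shows "card {k. k < u * K \<and> k mod K \<in> B} \<le> u * card B"
proof -
  have "{k. k < u * K \<and> k mod K \<in> B} \<subseteq> (\<lambda>(b, i). i * K + b) ` (B \<times> {..<u})"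
  proof
    fix k assume k: "k \<in> {k. k < u * K \<and> k mod K \<in> B}"
    have "k div K < u" using k assms(1) by (simp add: less_mult_imp_div_less)
    moreover have "k = (k div K) * K + k mod K" by simp
    ultimately show "k \<in> (\<lambda>(b, i). i * K + b) ` (B \<times> {..<u})" using k
      by (metis (no_types, lifting) SigmaI case_prod_conv image_eqI lessThan_iff mem_Collect_eq)
  qed
  hence "card {k. k < u * K \<and> k mod K \<in> B} \<le> card ((\<lambda>(b, i). i * K + b) ` (B \<times> {..<u}))"
    using assms by (intro card_mono) auto
  also have "\<dots> \<le> card (B \<times> {..<u})" by (rule card_image_le) (use assms in auto)
  also have "\<dots> = u * card B" by (simp add: card_cartesian_product)
  finally show ?thesis .
qed

lemma lt_mult: "(k::nat) < K \<Longrightarrow> 0 < u \<Longrightarrow> k < u * K"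
  by (cases u) auto

theorem lemma4:
  fixes K L F Z S u :: nat
    and A :: "nat \<Rightarrow> nat \<Rightarrow> nat option"
  assumes "0 < K" "0 < L" "L \<le> K" "0 < F" "0 < Z" "0 < S" "0 < u"
    and "is_EPDA K L F Z S A"
  shows "is_EPDA (u * K) (u * L) F Z S (rep_cols K A)"
proof -
  have E0: "\<forall>j<F. \<forall>k<K. \<forall>s. A j k = Some s \<longrightarrow> s \<in> {1..S}"
   and E1: "\<forall>k<K. card {j. j < F \<and> A j k = None} = Z"
   and E2: "\<forall>s\<in>{1..S}. \<exists>j<F. \<exists>k<K. A j k = Some s"
   and E3: "\<forall>k<K. \<forall>j1<F. \<forall>j2<F. A j1 k \<noteq> None \<longrightarrow> A j1 k = A j2 k \<longrightarrow> j1 = j2"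
   and E4: "\<forall>s\<in>{1..S}. \<forall>j<F. row_has A K j s \<longrightarrow>
        card {k. k < K \<and> col_has A F k s \<and> A j k \<noteq> None} \<le> L"
    using assms(8) unfolding is_EPDA_def by blast+
  have modK: "k mod K < K" for k using assms(1) by simp
  have rh: "row_has (rep_cols K A) (u * K) j s = row_has A K j s" for j s
  proof
    assume "row_has (rep_cols K A) (u * K) j s"
    then show "row_has A K j s" unfolding row_has_def rep_cols_def using modK by blast
  next
    assume "row_has A K j s"
    then obtain k where "k < K" "A j k = Some s" unfolding row_has_def by blast
    moreover have "k < u * K" using \<open>k < K\<close> assms(7)
      by (rule lt_mult)
    ultimately show "row_has (rep_cols K A) (u * K) j s"
      unfolding row_has_def rep_cols_def by (intro exI[of _ k]) simp
  qed
  have ch: "col_has (rep_cols K A) F k s = col_has A F (k mod K) s" for k s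
    unfolding col_has_def rep_cols_def by simp
  have c4: "card {k. k < u * K \<and> col_has (rep_cols K A) F k s \<and> rep_cols K A j k \<noteq> None} \<le> u * L"
    if s: "s \<in> {1..S}" and j: "j < F" and r: "row_has (rep_cols K A) (u * K) j s" for s j
  proof -
    define B where "B = {k. k < K \<and> col_has A F k s \<and> A j k \<noteq> None}"
    have "card B \<le> L" using E4 s j r rh unfolding B_def by simp
    have "{k. k < u * K \<and> col_has (rep_cols K A) F k s \<and> rep_cols K A j k \<noteq> None}
        = {k. k < u * K \<and> k mod K \<in> B}"
      unfolding B_def ch by (auto simp: rep_cols_def modK)
    also have "card \<dots> \<le> u * card B" by (rule card_rep_le) (auto simp: assms(1) B_def)
    also have "\<dots> \<le> u * L" using \<open>card B \<le> L\<close> by simp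
    finally show ?thesis .
  qed
  have c2: "\<exists>j<F. \<exists>k<u * K. rep_cols K A j k = Some s" if "s \<in> {1..S}" for s
  proof -
    have "\<exists>j<F. \<exists>k<K. A j k = Some s" using E2 that by (rule bspec)
    then obtain j where j: "j < F" and "\<exists>k<K. A j k = Some s" by blast
    then obtain k where k: "k < K" "A j k = Some s" by blast
    have "k < u * K" using k(1) assms(7) by (rule lt_mult)
    moreover have "rep_cols K A j k = Some s" using k by (simp add: rep_cols_def)
    ultimately show ?thesis using j by (intro exI[of _ j] conjI exI[of _ k])
  qed
  show ?thesis
    unfolding is_EPDA_def
  proof (intro conjI)
    show "u * L \<le> u * K" using assms by simp
    show "\<forall>j<F. \<forall>k<u * K. \<forall>s. rep_cols K A j k = Some s \<longrightarrow> s \<in> {1..S}"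
    proof (intro allI impI)
      fix j k s assume "j < F" "k < u * K" "rep_cols K A j k = Some s"
      then show "s \<in> {1..S}" using E0 modK[of k] unfolding rep_cols_def by blast
    qed
    show "\<forall>k<u * K. card {j. j < F \<and> rep_cols K A j k = None} = Z"
    proof (intro allI impI)
      fix k assume "k < u * K"
      show "card {j. j < F \<and> rep_cols K A j k = None} = Z"
        using E1 modK[of k] unfolding rep_cols_def by blast
    qed
    show "\<forall>s\<in>{1..S}. \<exists>j<F. \<exists>k<u * K. rep_cols K A j k = Some s" using c2 by blast
    show "\<forall>k<u * K. \<forall>j1<F. \<forall>j2<F. rep_cols K A j1 k \<noteq> None \<longrightarrow> rep_cols K A j1 k = rep_cols K A j2 k \<longrightarrow> j1 = j2"
    proof (intro allI impI)
      fix k j1 j2 assume "k < u * K" "j1 < F" "j2 < F" "rep_cols K A j1 k \<noteq> None" "rep_cols K A j1 k = rep_cols K A j2 k"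
      then show "j1 = j2" using E3 modK[of k] unfolding rep_cols_def by blast
    qed
    show "\<forall>s\<in>{1..S}. \<forall>j<F. row_has (rep_cols K A) (u * K) j s \<longrightarrow>
        card {k. k < u * K \<and> col_has (rep_cols K A) F k s \<and> rep_cols K A j k \<noteq> None} \<le> u * L"
      using c4 by blast
  qed
qed

end
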